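(* For every integer $k\ge2$, $\displaystyle\lim_{n\to\infty}\chi''_c(G_{k,n})=k+1$.
   Context: A half-edge has exactly one end vertex. Let $H_k$ be obtained from $K_{k,k}$ by deleting one vertex but keeping its $k$ incident edges as half-edges, and let $H'_k$ be obtained from $H_k$ by deleting $k-2$ of its half-edges. For $n\ge1$ let $B_1,\ldots,B_n$ be copies of $H'_k$ with half-edges $f_i,f'_i$ in $B_i$, and let $B_0$ be a single vertex $u$ with two half-edges $f_0,f'_{n+1}$. $G_{k,n}$ is obtained from the disjoint union of $B_0,\ldots,B_n$ by joining $f_i$ and $f'_{i+1}$ into an edge for each $0\le i\le n$. For integers $p\ge q\ge1$, a $(p,q)$-total colouring of a graph assigns colours in $\{0,\ldots,p-1\}$ to vertices and edges such that $q\le|c(a)-c(b)|\le p-q$ whenever $a,b$ are adjacent vertices, edges sharing an end, or an incident vertex–edge pair; $\chi''_c(G)=\inf\{p/q\mid G \text{ has a } (p,q)\text{-total colouring}\}$. *)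

theory Defs
  imports Complex_Main
begin

text \<open>A simple graph is given by a vertex set V and an edge set E of two-element
subsets of V. Elements of the graph (vertices and edges) are represented as
Inl v (vertex) and Inr e (edge).\<close>

fun total_adj :: "'v set set \<Rightarrow> ('v + 'v set) \<Rightarrow> ('v + 'v set) \<Rightarrow> bool" where
  "total_adj E (Inl a) (Inl b) = (a \<noteq> b \<and> {a, b} \<in> E)"
| "total_adj E (Inr e) (Inr f) = (e \<noteq> f \<and> e \<inter> f \<noteq> {})"
| "total_adj E (Inl a) (Inr e) = (a \<in> e)"
| "total_adj E (Inr e) (Inl a) = (a \<in> e)"

definition total_elems :: "'v set \<Rightarrow> 'v set set \<Rightarrow> ('v + 'v set) set" where
  "total_elems V E = Inl ` V \<union> Inr ` E"

definition pq_total_colouring ::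
  "'v set \<Rightarrow> 'v set set \<Rightarrow> nat \<Rightarrow> nat \<Rightarrow> (('v + 'v set) \<Rightarrow> nat) \<Rightarrow> bool" where
  "pq_total_colouring V E p q c \<longleftrightarrow>
     (\<forall>x \<in> total_elems V E. c x < p) \<and>
     (\<forall>x \<in> total_elems V E. \<forall>y \<in> total_elems V E. total_adj E x y \<longrightarrow>
        int q \<le> \<bar>int (c x) - int (c y)\<bar> \<and> \<bar>int (c x) - int (c y)\<bar> \<le> int p - int q)"

definition circular_total_chromatic_number :: "'v set \<Rightarrow> 'v set set \<Rightarrow> real" where
  "circular_total_chromatic_number V E =
     Inf {real p / real q | p q. 1 \<le> q \<and> q \<le> p \<and> (\<exists>c. pq_total_colouring V E p q c)}"

text \<open>Vertices: U is the vertex u of B_0; Av i j (1 \<le> i \<le> n, 1 \<le> j \<le> k) are the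
k vertices of the surviving side of K_{k,k} in block B_i; Bv i l (1 \<le> l \<le> k-1)
are the k-1 remaining vertices of the other side. In H'_k the two kept half-edges
are f_i at Av i 1 and f'_i at Av i 2 (all vertices of that side are symmetric).
Joining f_i with f'_{i+1} gives the edges u--Av 1 2, Av i 1--Av (i+1) 2 (1 \<le> i < n),
and Av n 1--u.\<close>

datatype gvert = U | Av nat nat | Bv nat nat

definition G_V :: "nat \<Rightarrow> nat \<Rightarrow> gvert set" where
  "G_V k n = {U} \<union> {Av i j | i j. 1 \<le> i \<and> i \<le> n \<and> 1 \<le> j \<and> j \<le> k}
                 \<union> {Bv i l | i l. 1 \<le> i \<and> i \<le> n \<and> 1 \<le> l \<and> l \<le> k - 1}"

definition G_E :: "nat \<Rightarrow> nat \<Rightarrow> gvert set set" where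
  "G_E k n = {{Av i j, Bv i l} | i j l. 1 \<le> i \<and> i \<le> n \<and> 1 \<le> j \<and> j \<le> k \<and> 1 \<le> l \<and> l \<le> k - 1}
           \<union> {{U, Av 1 2}}
           \<union> {{Av i 1, Av (i + 1) 2} | i. 1 \<le> i \<and> i < n}
           \<union> {{Av n 1, U}}"

end

theory Submission
  imports Defs
begin


definition okr :: "int \<Rightarrow> int \<Rightarrow> int \<Rightarrow> int \<Rightarrow> bool" where
  "okr P Q a b \<longleftrightarrow> Q \<le> (a - b) mod P \<and> (a - b) mod P \<le> P - Q"

lemma okr_intro:
  assumes "0 < Q" "Q \<le> d" "d \<le> P - Q" "a - b = d + m * P"
  shows "okr P Q a b"
proof -
  have "(a - b) mod P = d mod P" using assms(4) by simp
  also have "\<dots> = d" using assms by (intro mod_pos_pos_trivial) auto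
  finally show ?thesis using assms unfolding okr_def by simp
qed

lemma okr_final:
  assumes "0 < Q" "okr P Q a b"
  shows "Q \<le> \<bar>a mod P - b mod P\<bar> \<and> \<bar>a mod P - b mod P\<bar> \<le> P - Q"
proof -
  have P: "0 < P" using assms unfolding okr_def by linarith
  define w where "w = a mod P - b mod P"
  have r: "(a - b) mod P = w mod P" unfolding w_def by (simp add: mod_diff_eq)
  have b1: "-P < w" "w < P" unfolding w_def using P pos_mod_bound pos_mod_sign
    by (smt (verit))+
  show ?thesis
  proof (cases "0 \<le> w")
    case True
    then have "w mod P = w" using b1 by (simp add: mod_pos_pos_trivial)
    then show ?thesis using assms r True unfolding okr_def w_def[symmetric] by auto
  next
    case False
    have "w mod P = (w + P) mod P" by simp
    also have "\<dots> = w + P" using b1 False by (intro mod_pos_pos_trivial) auto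
    finally have "w mod P = w + P" .
    then show ?thesis using assms r False unfolding okr_def w_def[symmetric] by auto
  qed
qed

lemma okr_sym:
  assumes "0 < Q" "okr P Q a b" shows "okr P Q b a"
proof -
  have P: "0 < P" using assms unfolding okr_def by linarith
  define d where "d = (a - b) mod P"
  have d: "Q \<le> d" "d \<le> P - Q" using assms unfolding okr_def d_def by auto
  have "a - b = d + ((a - b) div P) * P" unfolding d_def by simp
  then have "b - a = (P - d) + (- ((a - b) div P) - 1) * P" by (simp add: algebra_simps)
  then show ?thesis using d assms by (intro okr_intro[where d = "P - d"]) auto
qed

lemma slot_ok:
  assumes Q: "0 < Q" and PP: "P = (K + 1) * Q + 1"
    and "0 \<le> a" "a \<le> K" "0 \<le> b" "b \<le> K" "a \<noteq> b"
  shows "okr P Q (Q * a + s) (Q * b + s)"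
proof (cases "b < a")
  case True
  have "Q * 1 \<le> Q * (a - b)" using True Q by (intro mult_left_mono) auto
  moreover have "Q * (a - b) \<le> Q * K" using assms by (intro mult_left_mono) auto
  ultimately show ?thesis using Q PP
    by (intro okr_intro[where d = "Q * (a - b)" and m = 0]) (auto simp: algebra_simps)
next
  case False
  then have ab: "a < b" using assms by auto
  have "Q * 1 \<le> Q * (b - a)" using ab Q by (intro mult_left_mono) auto
  moreover have "Q * (b - a) \<le> Q * K" using assms by (intro mult_left_mono) auto
  ultimately show ?thesis using Q PP
    by (intro okr_intro[where d = "P - Q * (b - a)" and m = "-1"]) (auto simp: algebra_simps)
qed

lemma conn_ok:
  assumes Q: "0 < Q" and PP: "P = (K + 1) * Q + 1"
    and "0 \<le> a" "a < K" "0 \<le> t" "t \<le> 1"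
  shows "okr P Q (Q * K + s + t) (Q * a + s)"
proof -
  have "Q * 1 \<le> Q * (K - a)" using assms by (intro mult_left_mono) auto
  then have 1: "Q \<le> Q * K - Q * a" by (simp add: algebra_simps)
  have 2: "0 \<le> Q * a" using assms by simp
  have 3: "Q * K - Q * a + t \<le> P - Q" using 2 PP assms(6) by (simp add: algebra_simps)
  show ?thesis
    by (rule okr_intro[where d = "Q * K - Q * a + t" and m = 0]) (use Q 1 3 assms(5) in auto)
qed



definition sh :: "nat \<Rightarrow> nat \<Rightarrow> int" where "sh q i = int (min i (2*q+1))"

definition vr :: "nat \<Rightarrow> nat \<Rightarrow> gvert \<Rightarrow> int" where
  "vr k q v = (case v of U \<Rightarrow> 0 | Av i j \<Rightarrow> int q * int (j - 1) + sh q i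
                | Bv i l \<Rightarrow> int q * int k + sh q i)"

definition er :: "nat \<Rightarrow> nat \<Rightarrow> nat \<Rightarrow> gvert set \<Rightarrow> int" where
  "er k q n e = (if e = {U, Av 1 2} then int q * int k + sh q 1
     else if e = {Av n 1, U} then int q * int k + sh q n
     else if (\<exists>i. e = {Av i 1, Av (Suc i) 2})
       then int q * int k + sh q (Suc (SOME i. e = {Av i 1, Av (Suc i) 2}))
     else (SOME v. \<exists>i j l. e = {Av i j, Bv i l} \<and> v = int q * int ((j + l - 1) mod k) + sh q i))"

lemma er_T2: "er k q n {U, Av 1 2} = int q * int k + sh q 1"
  by (simp add: er_def)

lemma er_T4: "er k q n {Av n 1, U} = int q * int k + sh q n"
  by (simp add: er_def doubleton_eq_iff)

lemma er_T3: "er k q n {Av i 1, Av (Suc i) 2} = int q * int k + sh q (Suc i)"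
proof -
  have "(SOME i'. {Av i 1, Av (Suc i) 2} = {Av i' 1, Av (Suc i') 2}) = i"
    by (rule some_equality) (auto simp: doubleton_eq_iff)
  then show ?thesis by (auto simp: er_def doubleton_eq_iff)
qed

lemma er_T1: "er k q n {Av i j, Bv i l} = int q * int ((j + l - 1) mod k) + sh q i"
proof -
  have "(SOME v. \<exists>i' j' l'. {Av i j, Bv i l} = {Av i' j', Bv i' l'} \<and>
          v = int q * int ((j' + l' - 1) mod k) + sh q i') = int q * int ((j + l - 1) mod k) + sh q i"
    by (rule some_equality) (auto simp: doubleton_eq_iff)
  then show ?thesis by (auto simp: er_def doubleton_eq_iff)
qed

lemma G_E_cases:
  assumes "e \<in> G_E k n"
  obtains (T1) i j l where "e = {Av i j, Bv i l}" "1 \<le> i" "i \<le> n" "1 \<le> j" "j \<le> k" "1 \<le> l" "l \<le> k - 1"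
  | (T2) "e = {U, Av 1 2}"
  | (T3) i where "e = {Av i 1, Av (Suc i) 2}" "1 \<le> i" "i < n"
  | (T4) "e = {Av n 1, U}"
  using assms unfolding G_E_def by auto

lemma int_mod_help:
  fixes a b k :: nat
  assumes "a mod k = b mod k"
  shows "int k dvd int a - int b"
proof -
  have "int (a mod k) = int (b mod k)" using assms by simp
  then have "int a mod int k = int b mod int k" by (simp add: of_nat_mod)
  then show ?thesis by (simp add: mod_eq_dvd_iff)
qed

lemma sd1:
  fixes j j' k l :: nat
  assumes "1 \<le> j" "j \<le> k" "1 \<le> j'" "j' \<le> k" "j \<noteq> j'"
  shows "(j + l - 1) mod k \<noteq> (j' + l - 1) mod k"
proof
  assume h: "(j + l - 1) mod k = (j' + l - 1) mod k"
  have "int k dvd int (j + l - 1) - int (j' + l - 1)" using int_mod_help[OF h] .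
  moreover have "int (j + l - 1) - int (j' + l - 1) = int j - int j'" using assms by simp
  ultimately have d: "int k dvd int j - int j'" by simp
  have "int j - int j' \<noteq> 0" using assms by simp
  then have "\<bar>int k\<bar> \<le> \<bar>int j - int j'\<bar>" using d dvd_imp_le_int by blast
  then show False using assms by linarith
qed

lemma sd2:
  fixes j l l' k :: nat
  assumes "1 \<le> l" "l < k" "1 \<le> l'" "l' < k" "l \<noteq> l'" "1 \<le> j"
  shows "(j + l - 1) mod k \<noteq> (j + l' - 1) mod k"
proof
  assume h: "(j + l - 1) mod k = (j + l' - 1) mod k"
  have "int k dvd int (j + l - 1) - int (j + l' - 1)" using int_mod_help[OF h] .
  moreover have "int (j + l - 1) - int (j + l' - 1) = int l - int l'" using assms by simp
  ultimately have d: "int k dvd int l - int l'" by simp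
  have "int l - int l' \<noteq> 0" using assms by simp
  then have "\<bar>int k\<bar> \<le> \<bar>int l - int l'\<bar>" using d dvd_imp_le_int by blast
  then show False using assms by linarith
qed

lemma sd3:
  fixes j l k :: nat
  assumes "1 \<le> j" "j \<le> k" "1 \<le> l" "l < k"
  shows "(j + l - 1) mod k \<noteq> j - 1"
proof
  assume h: "(j + l - 1) mod k = j - 1"
  have "(j - 1) mod k = j - 1" using assms by simp
  then have h2: "(j + l - 1) mod k = (j - 1) mod k" using h by simp
  have "int k dvd int (j + l - 1) - int (j - 1)" using int_mod_help[OF h2] .
  moreover have "int (j + l - 1) - int (j - 1) = int l" using assms by simp
  ultimately have d: "int k dvd int l" by simp
  have "int l \<noteq> 0" using assms by simp
  then have "\<bar>int k\<bar> \<le> \<bar>int l\<bar>" using d dvd_imp_le_int by blast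
  then show False using assms by linarith
qed



locale gk =
  fixes k q n :: nat
  assumes k2: "2 \<le> k" and q1: "1 \<le> q" and nq: "2 * q + 1 \<le> n"
begin

abbreviation "PP \<equiv> int ((k + 1) * q + 1)"
abbreviation ok where "ok a b \<equiv> okr PP (int q) a b"

lemma PP_eq: "PP = (int k + 1) * int q + 1" by (simp add: algebra_simps)
lemma Qpos: "0 < int q" using q1 by simp
lemma Kge: "2 \<le> int k" using k2 by simp

lemma sh1: "sh q 1 = 1" by (simp add: sh_def)
lemma shn: "sh q n = 2 * int q + 1" using nq by (simp add: sh_def)
lemma sh_step: "sh q (Suc i) = sh q i + (sh q (Suc i) - sh q i) \<and> 0 \<le> sh q (Suc i) - sh q i \<and> sh q (Suc i) - sh q i \<le> 1"
  by (auto simp: sh_def)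

lemma QK2: "int q * 2 \<le> int k * int q"
proof -
  have "int q * 2 \<le> int q * int k" using k2 by (intro mult_left_mono) auto
  then show ?thesis by (simp add: mult.commute)
qed
lemma QK1: "int q \<le> int k * int q" using QK2 Qpos by linarith

lemma ok_sym: "ok a b \<Longrightarrow> ok b a" using okr_sym Qpos by blast

lemma slot: "0 \<le> a \<Longrightarrow> a \<le> int k \<Longrightarrow> 0 \<le> b \<Longrightarrow> b \<le> int k \<Longrightarrow> a \<noteq> b \<Longrightarrow>
   ok (int q * a + s) (int q * b + s)"
  using slot_ok[OF Qpos PP_eq] by blast

lemma conn: "0 \<le> a \<Longrightarrow> a < int k \<Longrightarrow> 0 \<le> t \<Longrightarrow> t \<le> 1 \<Longrightarrow>
   ok (int q * int k + s + t) (int q * a + s)"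
  using conn_ok[OF Qpos PP_eq] by blast

lemma slot_lt: "int ((j + l - 1) mod k) < int k" using k2 by simp

lemma VV1: "1 \<le> j \<Longrightarrow> j \<le> k \<Longrightarrow> ok (vr k q (Av i j)) (vr k q (Bv i l))"
proof -
  assume "1 \<le> j" "j \<le> k"
  then have "ok (int q * int (j - 1) + sh q i) (int q * int k + sh q i)" by (intro slot) auto
  then show ?thesis unfolding vr_def gvert.case .
qed

lemma VV2: "ok (vr k q (Av 1 2)) (vr k q U)"
  unfolding vr_def gvert.case sh1 using Qpos PP_eq Kge
  by (intro okr_intro[where d = "int q + 1" and m = 0]) (auto simp: algebra_simps)

lemma VV3: "ok (vr k q (Av (Suc i) 2)) (vr k q (Av i 1))"
proof -
  have "vr k q (Av (Suc i) 2) - vr k q (Av i 1) = int q + (sh q (Suc i) - sh q i) + 0 * PP"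
    unfolding vr_def by simp
  moreover have "int q * 1 \<le> int q * int k" using k2 by (intro mult_left_mono) auto
  then have "int q + (sh q (Suc i) - sh q i) \<le> PP - int q"
    using sh_step[of i] PP_eq by (simp add: algebra_simps)
  ultimately show ?thesis using sh_step[of i] Qpos by (intro okr_intro) auto
qed

lemma VV4: "ok (vr k q (Av n 1)) (vr k q U)"
  unfolding vr_def gvert.case shn using Qpos PP_eq Kge
  by (intro okr_intro[where d = "2 * int q + 1" and m = 0]) (auto simp: algebra_simps)

lemma VV: assumes "{a, b} \<in> G_E k n" "a \<noteq> b" shows "ok (vr k q a) (vr k q b)"
  using assms(1)
proof (cases rule: G_E_cases)
  case (T1 i j l)
  then show ?thesis using VV1[OF T1(4,5), of i l] ok_sym[OF VV1[OF T1(4,5), of i l]] by (auto simp: doubleton_eq_iff)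
next
  case T2 then show ?thesis using VV2 ok_sym[OF VV2] by (auto simp: doubleton_eq_iff)
next
  case (T3 i) then show ?thesis using VV3[of i] ok_sym[OF VV3[of i]] by (auto simp: doubleton_eq_iff)
next
  case T4 then show ?thesis using VV4 ok_sym[OF VV4] by (auto simp: doubleton_eq_iff)
qed


lemma vrA: "vr k q (Av i j) = int q * int (j - 1) + sh q i" by (simp add: vr_def)
lemma vrB: "vr k q (Bv i l) = int q * int k + sh q i" by (simp add: vr_def)
lemma vrU: "vr k q U = 0" by (simp add: vr_def)

lemma VE1a: "1 \<le> j \<Longrightarrow> j \<le> k \<Longrightarrow> 1 \<le> l \<Longrightarrow> l < k \<Longrightarrow> ok (er k q n {Av i j, Bv i l}) (vr k q (Av i j))"
  unfolding er_T1 vrA using sd3[of j k l] by (intro slot) auto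

lemma VE1b: "ok (er k q n {Av i j, Bv i l}) (vr k q (Bv i l))"
  unfolding er_T1 vrB using slot_lt[of j l] by (intro slot) auto

lemma VE2a: "ok (er k q n {U, Av 1 2}) (vr k q U)"
  unfolding er_T2 vrU sh1 using Qpos PP_eq
  apply (intro okr_intro[where d = "int q * int k + 1" and m = 0]) apply (auto simp: algebra_simps) using QK1 apply linarith done

lemma VE2b: "ok (er k q n {U, Av 1 2}) (vr k q (Av 1 2))"
proof -
  have "ok (int q * int k + sh q 1 + 0) (int q * 1 + sh q 1)" using Kge by (intro conn) auto
  then show ?thesis unfolding er_T2 vrA by simp
qed

lemma VE3a: "ok (er k q n {Av i 1, Av (Suc i) 2}) (vr k q (Av i 1))"
proof -
  have "ok (int q * int k + sh q i + (sh q (Suc i) - sh q i)) (int q * 0 + sh q i)"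
    using Kge sh_step[of i] by (intro conn) auto
  then show ?thesis unfolding er_T3 vrA by simp
qed

lemma VE3b: "ok (er k q n {Av i 1, Av (Suc i) 2}) (vr k q (Av (Suc i) 2))"
proof -
  have "ok (int q * int k + sh q (Suc i) + 0) (int q * 1 + sh q (Suc i))"
    using Kge by (intro conn) auto
  then show ?thesis unfolding er_T3 vrA by simp
qed

lemma VE4a: "ok (er k q n {Av n 1, U}) (vr k q (Av n 1))"
proof -
  have "ok (int q * int k + sh q n + 0) (int q * 0 + sh q n)"
    using Kge by (intro conn) auto
  then show ?thesis unfolding er_T4 vrA by simp
qed

lemma VE4b: "ok (er k q n {Av n 1, U}) (vr k q U)"
  unfolding er_T4 vrU shn using Qpos PP_eq
  apply (intro okr_intro[where d = "int q" and m = 1]) apply (auto simp: algebra_simps) using QK1 apply linarith done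

lemma VE: assumes "e \<in> G_E k n" "a \<in> e" shows "ok (er k q n e) (vr k q a)"
  using assms(1)
proof (cases rule: G_E_cases)
  case (T1 i j l)
  have "l < k" using T1 k2 by auto
  then show ?thesis using assms(2) T1 VE1a[of j l i] VE1b[of i j l] by auto
next
  case T2 then show ?thesis using assms(2) VE2a VE2b by auto
next
  case (T3 i) then show ?thesis using assms(2) VE3a[of i] VE3b[of i] by auto
next
  case T4 then show ?thesis using assms(2) VE4a VE4b by auto
qed

lemma E11a: "1 \<le> j \<Longrightarrow> 1 \<le> l \<Longrightarrow> l < k \<Longrightarrow> 1 \<le> l' \<Longrightarrow> l' < k \<Longrightarrow> l \<noteq> l' \<Longrightarrow>
    ok (er k q n {Av i j, Bv i l}) (er k q n {Av i j, Bv i l'})"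
  unfolding er_T1 using sd2[of l k l' j] slot_lt[of j l] slot_lt[of j l'] by (intro slot) auto

lemma E11b: "1 \<le> j \<Longrightarrow> j \<le> k \<Longrightarrow> 1 \<le> j' \<Longrightarrow> j' \<le> k \<Longrightarrow> j \<noteq> j' \<Longrightarrow>
    ok (er k q n {Av i j, Bv i l}) (er k q n {Av i j', Bv i l})"
  unfolding er_T1 using sd1[of j k j' l] slot_lt[of j l] slot_lt[of j' l] by (intro slot) auto

lemma E12: "ok (er k q n {U, Av 1 2}) (er k q n {Av 1 2, Bv 1 l})"
proof -
  have "ok (int q * int k + sh q 1 + 0) (int q * int ((2 + l - 1) mod k) + sh q 1)"
    using slot_lt[of 2 l] by (intro conn) auto
  then show ?thesis unfolding er_T2 er_T1 by simp
qed

lemma E13a: "ok (er k q n {Av i 1, Av (Suc i) 2}) (er k q n {Av i 1, Bv i l})"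
proof -
  have "ok (int q * int k + sh q i + (sh q (Suc i) - sh q i)) (int q * int ((1 + l - 1) mod k) + sh q i)"
    using slot_lt[of 1 l] sh_step[of i] by (intro conn) auto
  then show ?thesis unfolding er_T3 er_T1 by simp
qed

lemma E13b: "ok (er k q n {Av i 1, Av (Suc i) 2}) (er k q n {Av (Suc i) 2, Bv (Suc i) l})"
proof -
  have "ok (int q * int k + sh q (Suc i) + 0) (int q * int ((2 + l - 1) mod k) + sh q (Suc i))"
    using slot_lt[of 2 l] by (intro conn) auto
  then show ?thesis unfolding er_T3 er_T1 by simp
qed

lemma E14: "ok (er k q n {Av n 1, U}) (er k q n {Av n 1, Bv n l})"
proof -
  have "ok (int q * int k + sh q n + 0) (int q * int ((1 + l - 1) mod k) + sh q n)"
    using slot_lt[of 1 l] by (intro conn) auto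
  then show ?thesis unfolding er_T4 er_T1 by simp
qed

lemma E24: "ok (er k q n {Av n 1, U}) (er k q n {U, Av 1 2})"
proof -
  show ?thesis unfolding er_T4 er_T2 shn sh1 using Qpos PP_eq
    apply (intro okr_intro[where d = "2 * int q" and m = 0]) apply (auto simp: algebra_simps) using QK2 apply linarith done
qed


lemma EE: assumes e: "e \<in> G_E k n" and f: "f \<in> G_E k n" and ef: "e \<noteq> f"
  and v: "v \<in> e" "v \<in> f"
  shows "ok (er k q n e) (er k q n f)"
  using e
proof (cases rule: G_E_cases)
  case (T1 i j l)
  note eT = T1
  show ?thesis using f
  proof (cases rule: G_E_cases)
    case (T1 i' j' l')
    have "(i' = i \<and> j' = j) \<or> (i' = i \<and> l' = l)" using v eT T1 by auto
    then show ?thesis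
    proof
      assume h: "i' = i \<and> j' = j"
      then have "l \<noteq> l'" using ef eT T1 by auto
      moreover have "l < k" "l' < k" using eT T1 k2 by auto
      ultimately show ?thesis using E11a[of j l l' i] eT T1 h by auto
    next
      assume h: "i' = i \<and> l' = l"
      then have "j \<noteq> j'" using ef eT T1 by auto
      then show ?thesis using E11b[of j j' i l] eT T1 h by auto
    qed
  next
    case T2
    then have "i = 1" "j = 2" using v eT by auto
    then show ?thesis using ok_sym[OF E12[of l]] eT T2 by simp
  next
    case (T3 i')
    then have "(i = i' \<and> j = 1) \<or> (i = Suc i' \<and> j = 2)" using v eT by auto
    then show ?thesis using ok_sym[OF E13a[of i' l]] ok_sym[OF E13b[of i' l]] eT T3 by auto
  next
    case T4
    then have "i = n" "j = 1" using v eT by auto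
    then show ?thesis using ok_sym[OF E14[of l]] eT T4 by simp
  qed
next
  case T2
  note eT = T2
  show ?thesis using f
  proof (cases rule: G_E_cases)
    case (T1 i j l)
    then have "i = 1" "j = 2" using v eT by auto
    then show ?thesis using E12[of l] eT T1 by simp
  next
    case T2 then show ?thesis using ef eT by simp
  next
    case (T3 i) then show ?thesis using v eT by auto
  next
    case T4 then show ?thesis using ok_sym[OF E24] eT by simp
  qed
next
  case (T3 i)
  note eT = T3
  show ?thesis using f
  proof (cases rule: G_E_cases)
    case (T1 i' j l)
    then have "(i' = i \<and> j = 1) \<or> (i' = Suc i \<and> j = 2)" using v eT by auto
    then show ?thesis using E13a[of i l] E13b[of i l] eT T1 by auto
  next
    case T2 then show ?thesis using v eT by auto
  next
    case (T3 i')
    then have "i' = i" using v eT by auto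
    then show ?thesis using ef eT T3 by simp
  next
    case T4 then show ?thesis using v eT by auto
  qed
next
  case T4
  note eT = T4
  show ?thesis using f
  proof (cases rule: G_E_cases)
    case (T1 i j l)
    then have "i = n" "j = 1" using v eT by auto
    then show ?thesis using E14[of l] eT T1 by simp
  next
    case T2 then show ?thesis using E24 eT by simp
  next
    case (T3 i) then show ?thesis using v eT by auto
  next
    case T4 then show ?thesis using ef eT by simp
  qed
qed

end


definition raw :: "nat \<Rightarrow> nat \<Rightarrow> nat \<Rightarrow> gvert + gvert set \<Rightarrow> int" where
  "raw k q n x = (case x of Inl v \<Rightarrow> vr k q v | Inr e \<Rightarrow> er k q n e)"

definition col :: "nat \<Rightarrow> nat \<Rightarrow> nat \<Rightarrow> gvert + gvert set \<Rightarrow> nat" where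
  "col k q n x = nat (raw k q n x mod int ((k + 1) * q + 1))"

context gk begin

lemma PPpos: "0 < PP" by (simp only: of_nat_0_less_iff)

lemma col_int: "int (col k q n x) = raw k q n x mod PP"
proof -
  have "0 \<le> raw k q n x mod PP" by (rule pos_mod_sign) (rule PPpos)
  then show ?thesis unfolding col_def by (simp only: int_nat_eq) simp
qed

lemma raw_ok:
  assumes "x \<in> total_elems (G_V k n) (G_E k n)" "y \<in> total_elems (G_V k n) (G_E k n)"
    "total_adj (G_E k n) x y"
  shows "ok (raw k q n x) (raw k q n y)"
proof (cases x)
  case (Inl a)
  note xa = Inl
  show ?thesis
  proof (cases y)
    case (Inl b)
    then show ?thesis using xa assms VV unfolding raw_def by auto
  next
    case (Inr f)
    then have "f \<in> G_E k n" using assms(2) unfolding total_elems_def by auto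
    moreover have "a \<in> f" using assms(3) xa Inr by simp
    ultimately show ?thesis using xa Inr ok_sym[OF VE] unfolding raw_def by auto
  qed
next
  case (Inr e)
  note xe = Inr
  have eE: "e \<in> G_E k n" using assms(1) xe unfolding total_elems_def by auto
  show ?thesis
  proof (cases y)
    case (Inl b)
    then have "b \<in> e" using assms(3) xe by simp
    then show ?thesis using xe Inl VE[OF eE] unfolding raw_def by auto
  next
    case (Inr f)
    then have fE: "f \<in> G_E k n" using assms(2) unfolding total_elems_def by auto
    have "e \<noteq> f \<and> e \<inter> f \<noteq> {}" using assms(3) xe Inr by simp
    then obtain v where "v \<in> e" "v \<in> f" "e \<noteq> f" by blast
    then show ?thesis using xe Inr EE[OF eE fE] unfolding raw_def by auto
  qed
qed

lemma colouring: "pq_total_colouring (G_V k n) (G_E k n) ((k + 1) * q + 1) q (col k q n)"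
  unfolding pq_total_colouring_def
proof (intro conjI ballI impI)
  fix x
  have "raw k q n x mod PP < PP" by (rule pos_mod_bound) (rule PPpos)
  then show "col k q n x < (k + 1) * q + 1" using col_int[of x] by linarith
next
  fix x y assume "x \<in> total_elems (G_V k n) (G_E k n)" "y \<in> total_elems (G_V k n) (G_E k n)"
    "total_adj (G_E k n) x y"
  then have "ok (raw k q n x) (raw k q n y)" by (rule raw_ok)
  from okr_final[OF Qpos this]
  show "int q \<le> \<bar>int (col k q n x) - int (col k q n y)\<bar>"
    "\<bar>int (col k q n x) - int (col k q n y)\<bar> \<le> int ((k + 1) * q + 1) - int q"
    unfolding col_int by auto
qed

end

lemma spread:
  fixes S :: "nat set"
  shows "finite S \<Longrightarrow> S \<noteq> {} \<Longrightarrow> (\<forall>x\<in>S. \<forall>y\<in>S. x < y \<longrightarrow> x + q \<le> y) \<Longrightarrow>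
    Min S + (card S - 1) * q \<le> Max S"
proof (induction "card S" arbitrary: S)
  case 0 then show ?case by simp
next
  case (Suc m)
  show ?case
  proof (cases m)
    case 0
    then have "card S = 1" using Suc.hyps(2) by simp
    then obtain x where "S = {x}" by (rule card_1_singletonE)
    then show ?thesis by simp
  next
    case (Suc m')
    define S' where "S' = S - {Max S}"
    have MS: "Max S \<in> S" using Suc.prems(1,2) by (rule Max_in)
    have fin: "finite S'" using Suc.prems(1) unfolding S'_def by simp
    have cS': "card S' = m" using Suc.hyps(2) MS Suc.prems(1) unfolding S'_def by simp
    then have ne: "S' \<noteq> {}" using \<open>m = Suc m'\<close> by auto
    have sep': "\<forall>x\<in>S'. \<forall>y\<in>S'. x < y \<longrightarrow> x + q \<le> y" using Suc.prems(3) unfolding S'_def by blast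
    have IH: "Min S' + (card S' - 1) * q \<le> Max S'"
      using Suc.hyps(1)[OF cS'[symmetric] fin ne sep'] .
    have sub: "S' \<subseteq> S" unfolding S'_def by blast
    have m1: "Min S \<le> Min S'" using Min_antimono[OF sub ne Suc.prems(1)] .
    have inS: "Max S' \<in> S'" using fin ne by (rule Max_in)
    then have a: "Max S' \<in> S" "Max S' \<noteq> Max S" unfolding S'_def by auto
    have "Max S' \<le> Max S" using Suc.prems(1) a(1) by simp
    then have "Max S' < Max S" using a(2) by simp
    then have "Max S' + q \<le> Max S" using Suc.prems(3) a(1) MS by blast
    moreover have "card S - 1 = Suc m'" using Suc.hyps(2) \<open>m = Suc m'\<close> by simp
    ultimately show ?thesis using IH cS' m1 \<open>m = Suc m'\<close> by simp
  qed
qed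



lemma lower:
  assumes k2: "2 \<le> k" and n1: "1 \<le> n" and q1: "1 \<le> q"
    and col: "pq_total_colouring (G_V k n) (G_E k n) p q c"
  shows "(k + 1) * q \<le> p"
proof -
  define g where "g j = (if j = 0 then Inl (Bv 1 1) else Inr {Av 1 j, Bv 1 1})" for j :: nat
  have el: "g j \<in> total_elems (G_V k n) (G_E k n)" if "j \<le> k" for j
  proof (cases "j = 0")
    case True
    have "Bv 1 1 \<in> G_V k n" using k2 n1 unfolding G_V_def by auto
    then show ?thesis using True unfolding g_def total_elems_def by auto
  next
    case False
    have "{Av 1 j, Bv 1 1} \<in> G_E k n" unfolding G_E_def
      apply (intro UnI1)
      apply (rule CollectI)
      apply (rule exI[of _ 1], rule exI[of _ j], rule exI[of _ 1])
      using k2 n1 that False by simp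
    then show ?thesis using False unfolding g_def total_elems_def by auto
  qed
  have adj: "total_adj (G_E k n) (g j) (g j')" if "j \<noteq> j'" for j j'
  proof (cases "j = 0")
    case True
    then have "j' \<noteq> 0" using that by simp
    then show ?thesis using True unfolding g_def by simp
  next
    case False
    show ?thesis
    proof (cases "j' = 0")
      case True then show ?thesis using False unfolding g_def by simp
    next
      case F2: False
      have "{Av 1 j, Bv 1 1} \<noteq> {Av 1 j', Bv 1 1}" using that by (simp add: doubleton_eq_iff)
      moreover have "Bv 1 1 \<in> {Av 1 j, Bv 1 1} \<inter> {Av 1 j', Bv 1 1}" by simp
      ultimately show ?thesis using False F2 unfolding g_def by auto
    qed
  qed
  have cc: "int q \<le> \<bar>int (c (g j)) - int (c (g j'))\<bar> \<and> \<bar>int (c (g j)) - int (c (g j'))\<bar> \<le> int p - int q"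
    if "j \<le> k" "j' \<le> k" "j \<noteq> j'" for j j'
    using col el[OF that(1)] el[OF that(2)] adj[OF that(3)] unfolding pq_total_colouring_def by blast
  define S where "S = (\<lambda>j. c (g j)) ` {0..k}"
  have inj: "inj_on (\<lambda>j. c (g j)) {0..k}"
  proof (rule inj_onI)
    fix j j' assume "j \<in> {0..k}" "j' \<in> {0..k}" "c (g j) = c (g j')"
    then show "j = j'" using cc[of j j'] q1 by (cases "j = j'") auto
  qed
  have cardS: "card S = k + 1" unfolding S_def using card_image[OF inj] by simp
  have finS: "finite S" "S \<noteq> {}" unfolding S_def by auto
  have sep: "\<forall>x\<in>S. \<forall>y\<in>S. x < y \<longrightarrow> x + q \<le> y"
  proof (intro ballI impI)
    fix x y assume "x \<in> S" "y \<in> S" "x < y"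
    then obtain j j' where "j \<le> k" "j' \<le> k" "x = c (g j)" "y = c (g j')" unfolding S_def by auto
    moreover have "j \<noteq> j'" using \<open>x < y\<close> calculation by auto
    ultimately show "x + q \<le> y" using cc[of j j'] \<open>x < y\<close> by auto
  qed
  have sp: "Min S + k * q \<le> Max S" using spread[OF finS sep] cardS by simp
  have "Max S \<in> S" using Max_in[OF finS] .
  then obtain a where a0: "a \<in> {0..k}" "Max S = c (g a)" unfolding S_def by blast
  then have a: "a \<le> k" "Max S = c (g a)" by auto
  have "Min S \<in> S" using Min_in[OF finS] .
  then obtain b where b0: "b \<in> {0..k}" "Min S = c (g b)" unfolding S_def by blast
  then have b: "b \<le> k" "Min S = c (g b)" by auto
  have "a \<noteq> b"
  proof
    assume "a = b"
    then have "Max S = Min S" using a b by simp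
    then show False using sp k2 q1 by simp
  qed
  then have "\<bar>int (Max S) - int (Min S)\<bar> \<le> int p - int q" using cc[of a b] a b by simp
  then have "int (k * q) \<le> int p - int q" using sp by linarith
  then have "int ((k + 1) * q) \<le> int p" by (simp add: algebra_simps)
  then show ?thesis by (simp only: of_nat_le_iff)
qed

lemma chi_lower:
  assumes "2 \<le> k" "1 \<le> n"
    and ne: "{real p / real q | p q. 1 \<le> q \<and> q \<le> p \<and> (\<exists>c. pq_total_colouring (G_V k n) (G_E k n) p q c)} \<noteq> {}"
  shows "real (k + 1) \<le> circular_total_chromatic_number (G_V k n) (G_E k n)"
  unfolding circular_total_chromatic_number_def
proof (rule cInf_greatest[OF ne])
  fix x assume "x \<in> {real p / real q | p q. 1 \<le> q \<and> q \<le> p \<and> (\<exists>c. pq_total_colouring (G_V k n) (G_E k n) p q c)}"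
  then obtain p q c where x: "x = real p / real q" "1 \<le> q" "pq_total_colouring (G_V k n) (G_E k n) p q c" by auto
  have "(k + 1) * q \<le> p" using lower[OF assms(1,2) x(2,3)] .
  then have "real (k + 1) * real q \<le> real p" by (metis of_nat_le_iff of_nat_mult)
  moreover have "0 < real q" using x(2) by simp
  ultimately show "real (k + 1) \<le> x" unfolding x(1) by (subst pos_le_divide_eq) auto
qed

lemma chi_upper:
  assumes "2 \<le> k" "1 \<le> q" "2 * q + 1 \<le> n"
  shows "circular_total_chromatic_number (G_V k n) (G_E k n) \<le> real ((k + 1) * q + 1) / real q"
    and "{real p / real q | p q. 1 \<le> q \<and> q \<le> p \<and> (\<exists>c. pq_total_colouring (G_V k n) (G_E k n) p q c)} \<noteq> {}"
proof -
  define S where "S = {real p / real q | p q. 1 \<le> q \<and> q \<le> p \<and> (\<exists>c. pq_total_colouring (G_V k n) (G_E k n) p q c)}"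
  have gkI: "gk k q n" using assms by (simp add: gk_def)
  have c: "\<exists>c. pq_total_colouring (G_V k n) (G_E k n) ((k + 1) * q + 1) q c"
    by (rule exI[of _ "col k q n"], rule gk.colouring[OF gkI])
  have le: "q \<le> (k + 1) * q + 1" by simp
  have mem: "real ((k + 1) * q + 1) / real q \<in> S"
    unfolding S_def
    apply (rule CollectI)
    apply (rule exI[of _ "(k + 1) * q + 1"])
    apply (rule exI[of _ q])
    apply (intro conjI refl le c)
    apply (rule assms(2))
    done
  then have "S \<noteq> {}" by (metis empty_iff)
  then show "{real p / real q | p q. 1 \<le> q \<and> q \<le> p \<and> (\<exists>c. pq_total_colouring (G_V k n) (G_E k n) p q c)} \<noteq> {}"
    unfolding S_def .
  have bdd: "bdd_below S"
  proof (rule bdd_belowI[where m = 0])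
    fix x assume "x \<in> S"
    then obtain p q where "x = real p / real q" unfolding S_def by blast
    then show "0 \<le> x" by simp
  qed
  show "circular_total_chromatic_number (G_V k n) (G_E k n) \<le> real ((k + 1) * q + 1) / real q"
    unfolding circular_total_chromatic_number_def S_def[symmetric] by (rule cInf_lower[OF mem bdd])
qed


theorem corollary5:
  fixes k :: nat
  assumes "k \<ge> 2"
  shows "(\<lambda>n. circular_total_chromatic_number (G_V k n) (G_E k n)) \<longlonglongrightarrow> real (k + 1)"
proof -
  define f where "f n = circular_total_chromatic_number (G_V k n) (G_E k n)" for n
  have both: "real (k + 1) \<le> f n \<and> f n \<le> real (k + 1) + 2 / (-2 + real n)" if n3: "3 \<le> n" for n
  proof -
    define q where "q = (n - 1) div 2"
    have q1: "1 \<le> q" using n3 unfolding q_def by simp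
    have qn: "2 * q + 1 \<le> n" unfolding q_def using n3 by simp
    have qn2: "n \<le> 2 * q + 2" unfolding q_def using n3 by simp
    note U = chi_upper[OF assms q1 qn]
    have lo: "real (k + 1) \<le> f n" unfolding f_def using chi_lower[OF assms _ U(2)] n3 by simp
    have qpos: "0 < real q" using q1 by simp
    have "real ((k + 1) * q + 1) / real q = real (k + 1) + 1 / real q"
      using qpos by (simp add: field_simps)
    moreover have "1 / real q \<le> 2 / (-2 + real n)"
    proof -
      have np: "0 < -2 + real n" using n3 by simp
      have "-2 + real n \<le> 2 * real q" using qn2 by simp
      then show ?thesis using qpos np by (simp add: divide_simps)
    qed
    ultimately have "f n \<le> real (k + 1) + 2 / (-2 + real n)" using U(1) unfolding f_def by linarith
    then show ?thesis using lo by simp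
  qed
  have low: "\<forall>\<^sub>F n in sequentially. real (k + 1) \<le> f n"
    using both by (intro eventually_sequentiallyI[of 3]) blast
  have up: "\<forall>\<^sub>F n in sequentially. f n \<le> real (k + 1) + 2 / (-2 + real n)"
    using both by (intro eventually_sequentiallyI[of 3]) blast
  have inf: "filterlim (\<lambda>n. -2 + real n) at_infinity sequentially"
    by (rule filterlim_at_top_imp_at_infinity[OF filterlim_tendsto_add_at_top[OF tendsto_const filterlim_real_sequentially]])
  have z: "(\<lambda>n. 2 / (-2 + real n)) \<longlonglongrightarrow> 0"
    by (rule tendsto_divide_0[OF tendsto_const inf])
  have lim: "(\<lambda>n. real (k + 1) + 2 / (-2 + real n)) \<longlonglongrightarrow> real (k + 1)"
    using tendsto_add[OF tendsto_const z, of "real (k + 1)"] by simp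
  have "f \<longlonglongrightarrow> real (k + 1)"
    by (rule tendsto_sandwich[OF low up tendsto_const lim])
  then show ?thesis unfolding f_def .
qed

end
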